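(* Let $A$ be an operator in a von Neumann algebra $\mathscr{R}$ acting on a Hilbert space $\mathscr{H}$. Then the left ideal $\mathscr{R}A$ is norm-closed if and only if $\mathscr{R}A$ is weak-operator closed. *)

theory Defs
  imports "HOL-Analysis.Analysis"
begin

class complex_vector = real_vector +
  fixes scaleC :: "complex \<Rightarrow> 'a \<Rightarrow> 'a"
  assumes scaleC_add_right: "scaleC a (x + y) = scaleC a x + scaleC a y"
    and scaleC_add_left: "scaleC (a + b) x = scaleC a x + scaleC b x"
    and scaleC_scaleC: "scaleC a (scaleC b x) = scaleC (a * b) x"
    and scaleC_one: "scaleC 1 x = x"
    and scaleR_scaleC: "scaleR r x = scaleC (complex_of_real r) x"

class complex_inner = complex_vector + real_normed_vector +
  fixes cinner :: "'a \<Rightarrow> 'a \<Rightarrow> complex"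
  assumes cinner_commute: "cinner x y = cnj (cinner y x)"
    and cinner_add_right: "cinner x (y + z) = cinner x y + cinner x z"
    and cinner_scaleC_right: "cinner x (scaleC a y) = a * cinner x y"
    and cinner_ge_zero: "0 \<le> Re (cinner x x)"
    and cinner_eq_zero_iff: "cinner x x = 0 \<longleftrightarrow> x = 0"
    and norm_eq_sqrt_cinner: "norm x = sqrt (Re (cinner x x))"

class chilbert_space = complex_inner + complete_space

text \<open>Bounded operators on H: bounded (real-)linear maps that are complex-linear.
  The norm topology on them is the operator-norm topology of the blinfun type.\<close>
definition bounded_op :: "('h::chilbert_space \<Rightarrow>\<^sub>L 'h) \<Rightarrow> bool" where
  "bounded_op T \<longleftrightarrow> (\<forall>c x. blinfun_apply T (scaleC c x) = scaleC c (blinfun_apply T x))"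

definition is_adjoint :: "('h::chilbert_space \<Rightarrow>\<^sub>L 'h) \<Rightarrow> ('h \<Rightarrow>\<^sub>L 'h) \<Rightarrow> bool" where
  "is_adjoint T S \<longleftrightarrow> (\<forall>x y. cinner (blinfun_apply T x) y = cinner x (blinfun_apply S y))"

text \<open>T lies in the weak-operator closure of S: every basic WOT neighbourhood
  {U. \<forall>(x,y)\<in>F. |<(T - U) x, y>| < e} (F finite, e > 0) meets S.\<close>
definition wot_adherent :: "('h::chilbert_space \<Rightarrow>\<^sub>L 'h) set \<Rightarrow> ('h \<Rightarrow>\<^sub>L 'h) \<Rightarrow> bool" where
  "wot_adherent S T \<longleftrightarrow>
     (\<forall>F::('h \<times> 'h) set. \<forall>e>0. finite F \<longrightarrow>
        (\<exists>U\<in>S. \<forall>(x, y)\<in>F. cmod (cinner (blinfun_apply T x - blinfun_apply U x) y) < e))"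

definition wot_closed :: "('h::chilbert_space \<Rightarrow>\<^sub>L 'h) set \<Rightarrow> bool" where
  "wot_closed S \<longleftrightarrow> (\<forall>T. bounded_op T \<and> wot_adherent S T \<longrightarrow> T \<in> S)"

definition von_neumann_algebra :: "('h::chilbert_space \<Rightarrow>\<^sub>L 'h) set \<Rightarrow> bool" where
  "von_neumann_algebra R \<longleftrightarrow>
     (\<forall>T\<in>R. bounded_op T) \<and>
     id_blinfun \<in> R \<and>
     (\<forall>S\<in>R. \<forall>T\<in>R. S + T \<in> R) \<and>
     (\<forall>c. \<forall>T\<in>R. \<exists>U\<in>R. \<forall>x. blinfun_apply U x = scaleC c (blinfun_apply T x)) \<and>
     (\<forall>S\<in>R. \<forall>T\<in>R. S o\<^sub>L T \<in> R) \<and>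
     (\<forall>T\<in>R. \<exists>S\<in>R. is_adjoint T S) \<and>
     wot_closed R"

definition left_mult_set :: "('h::chilbert_space \<Rightarrow>\<^sub>L 'h) set \<Rightarrow> ('h \<Rightarrow>\<^sub>L 'h) \<Rightarrow> ('h \<Rightarrow>\<^sub>L 'h) set" where
  "left_mult_set R A = (\<lambda>T. T o\<^sub>L A) ` R"

end

theory Submission
  imports Defs
begin


lemma cinner_add_left: "cinner (x + y) z = cinner x z + cinner (y::'a::complex_inner) z"
proof -
  have "cinner (x + y) z = cnj (cinner z (x+y))" by (rule cinner_commute)
  also have "\<dots> = cnj (cinner z x) + cnj (cinner z y)" by (simp add: cinner_add_right)
  also have "\<dots> = cinner x z + cinner y z" by (simp add: cinner_commute[of x z] cinner_commute[of y z])
  finally show ?thesis .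
qed

lemma cinner_scaleC_left: "cinner (scaleC a x) (y::'a::complex_inner) = cnj a * cinner x y"
proof -
  have "cinner (scaleC a x) y = cnj (cinner y (scaleC a x))" by (rule cinner_commute)
  also have "\<dots> = cnj a * cnj (cinner y x)" by (simp add: cinner_scaleC_right)
  also have "\<dots> = cnj a * cinner x y" by (simp add: cinner_commute[of x y])
  finally show ?thesis .
qed

lemma cinner_zero_right[simp]: "cinner x (0::'a::complex_inner) = 0"
  using cinner_add_right[of x 0 0] by simp

lemma cinner_zero_left[simp]: "cinner (0::'a::complex_inner) x = 0"
  using cinner_add_left[of 0 0 x] by simp

lemma cinner_minus_right: "cinner x (- y) = - cinner x (y::'a::complex_inner)"
  using cinner_add_right[of x y "-y"] by (simp add: add_eq_0_iff)

lemma cinner_minus_left: "cinner (- x) y = - cinner x (y::'a::complex_inner)"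
  using cinner_add_left[of x "-x" y] by (simp add: add_eq_0_iff)

lemma cinner_diff_right: "cinner x (y - z) = cinner x y - cinner x (z::'a::complex_inner)"
  unfolding diff_conv_add_uminus by (simp only: cinner_add_right cinner_minus_right)

lemma cinner_diff_left: "cinner (x - y) z = cinner x z - cinner y (z::'a::complex_inner)"
  unfolding diff_conv_add_uminus by (simp only: cinner_add_left cinner_minus_left)

lemma cinner_scaleR_right: "cinner x (scaleR r y) = of_real r * cinner x (y::'a::complex_inner)"
  by (simp add: scaleR_scaleC cinner_scaleC_right)

lemma cinner_scaleR_left: "cinner (scaleR r x) y = of_real r * cinner x (y::'a::complex_inner)"
  by (simp add: scaleR_scaleC cinner_scaleC_left)

lemma cinner_self_Im: "Im (cinner x (x::'a::complex_inner)) = 0"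
proof -
  have "Im (cinner x x) = Im (cnj (cinner x x))" using cinner_commute[of x x] by simp
  then show ?thesis by simp
qed

lemma cinner_self: "cinner x (x::'a::complex_inner) = of_real ((norm x)\<^sup>2)"
proof -
  have "(norm x)\<^sup>2 = Re (cinner x x)" using norm_eq_sqrt_cinner[of x] cinner_ge_zero[of x] by simp
  then show ?thesis using cinner_self_Im[of x] by (simp add: complex_eq_iff)
qed

lemma Re_cinner_sym: "Re (cinner y x) = Re (cinner x (y::'a::complex_inner))"
  using cinner_commute[of y x] by simp

lemma norm_diff_sq: "(norm (x - y))\<^sup>2 = (norm x)\<^sup>2 - 2 * Re (cinner x y) + (norm (y::'a::complex_inner))\<^sup>2"
proof -
  have "of_real ((norm (x - y))\<^sup>2) = cinner (x - y) (x - y)" by (simp add: cinner_self)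
  also have "\<dots> = cinner x x - cinner x y - cinner y x + cinner y y"
    by (simp add: cinner_diff_left cinner_diff_right)
  finally have e: "of_real ((norm (x - y))\<^sup>2) = cinner x x - cinner x y - cinner y x + cinner y y" .
  have "(norm (x - y))\<^sup>2 = Re (cinner x x) - Re (cinner x y) - Re (cinner y x) + Re (cinner y y)"
    using arg_cong[OF e, of Re] by simp
  then show ?thesis by (simp add: cinner_self Re_cinner_sym)
qed

lemma cauchy_schwarz: "cmod (cinner x y) \<le> norm x * norm (y::'a::complex_inner)"
proof (cases "y = 0")
  case True then show ?thesis by simp
next
  case False
  define n where "n = (norm y)\<^sup>2"
  have n: "n > 0" using False by (simp add: n_def)
  define w where "w = cinner y x"
  define q where "q = (of_real (cmod w))\<^sup>2 / (of_real n :: complex)"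
  have wn: "w * cnj w = (of_real (cmod w))\<^sup>2" using complex_norm_square[of w] by simp
  define c where "c = w / of_real n"
  have "0 \<le> Re (cinner (x - scaleC c y) (x - scaleC c y))" by (rule cinner_ge_zero)
  also have "cinner (x - scaleC c y) (x - scaleC c y) =
      cinner x x - c * cinner x y - cnj c * cinner y x + cnj c * c * cinner y y"
    by (simp add: cinner_diff_left cinner_diff_right cinner_scaleC_left cinner_scaleC_right algebra_simps)
  also have "cinner y y = of_real n" by (simp add: cinner_self n_def)
  also have "cinner x y = cnj w" unfolding w_def by (rule cinner_commute)
  also have "cinner y x = w" by (simp add: w_def)
  finally have 1: "0 \<le> Re (cinner x x - c * cnj w - cnj c * w + cnj c * c * of_real n)" .
  have 2: "c * cnj w = q" unfolding c_def q_def using wn by simp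
  have 3: "cnj c * w = q" unfolding c_def q_def using wn by (simp add: mult.commute)
  have 4: "cnj c * c * of_real n = q" unfolding c_def q_def using wn n
    by (simp add: power2_eq_square mult.commute)
  have "Re q = (cmod w)\<^sup>2 / n" unfolding q_def
    by (metis Re_complex_of_real of_real_divide of_real_power)
  then have "0 \<le> (norm x)\<^sup>2 - (cmod w)\<^sup>2 / n" using 1 2 3 4 by (simp add: cinner_self)
  then have "(cmod w)\<^sup>2 \<le> (norm x)\<^sup>2 * (norm y)\<^sup>2" using n by (simp add: n_def field_simps)
  then have "(cmod w)\<^sup>2 \<le> (norm x * norm y)\<^sup>2" by (simp add: power_mult_distrib)
  then have "cmod w \<le> norm x * norm y"
    by (meson mult_nonneg_nonneg norm_ge_zero power2_le_imp_le)
  then show ?thesis using cinner_commute[of x y] by (simp add: w_def)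
qed



instance chilbert_space \<subseteq> banach ..

lemma norm_scaleC: "norm (scaleC c x) = cmod c * norm (x::'a::complex_inner)"
proof -
  have "(norm (scaleC c x))\<^sup>2 = Re (cinner (scaleC c x) (scaleC c x))" by (simp add: cinner_self)
  also have "cinner (scaleC c x) (scaleC c x) = (cnj c * c) * cinner x x"
    by (simp add: cinner_scaleC_left cinner_scaleC_right)
  also have "cnj c * c = of_real ((cmod c)\<^sup>2)" using complex_norm_square[of c] by (simp add: mult.commute)
  finally have "(norm (scaleC c x))\<^sup>2 = (cmod c * norm x)\<^sup>2" by (simp add: cinner_self power_mult_distrib)
  then show ?thesis by (simp add: power2_eq_iff_nonneg)
qed

lemma vna_bounded: "von_neumann_algebra R \<Longrightarrow> T \<in> R \<Longrightarrow> bounded_op T"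
  unfolding von_neumann_algebra_def by blast
lemma vna_id: "von_neumann_algebra R \<Longrightarrow> id_blinfun \<in> R"
  unfolding von_neumann_algebra_def by blast
lemma vna_add: "von_neumann_algebra R \<Longrightarrow> S \<in> R \<Longrightarrow> T \<in> R \<Longrightarrow> S + T \<in> R"
  unfolding von_neumann_algebra_def by blast
lemma vna_comp: "von_neumann_algebra R \<Longrightarrow> S \<in> R \<Longrightarrow> T \<in> R \<Longrightarrow> S o\<^sub>L T \<in> R"
  unfolding von_neumann_algebra_def by blast
lemma vna_adj: "von_neumann_algebra R \<Longrightarrow> T \<in> R \<Longrightarrow> \<exists>S\<in>R. is_adjoint T S"
  unfolding von_neumann_algebra_def by blast
lemma vna_wot: "von_neumann_algebra R \<Longrightarrow> wot_closed R"
  unfolding von_neumann_algebra_def by blast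
lemma vna_scaleR:
  assumes V: "von_neumann_algebra R" and T: "T \<in> R" shows "r *\<^sub>R T \<in> R"
proof -
  obtain U where U: "U \<in> R" "\<And>x. blinfun_apply U x = scaleC (of_real r) (blinfun_apply T x)"
    using V T unfolding von_neumann_algebra_def by meson
  have "U = r *\<^sub>R T" by (rule blinfun_eqI) (simp add: U(2) scaleR_scaleC scaleR_blinfun.rep_eq)
  then show ?thesis using U(1) by simp
qed
lemma vna_diff: "von_neumann_algebra R \<Longrightarrow> S \<in> R \<Longrightarrow> T \<in> R \<Longrightarrow> S - T \<in> R"
  using vna_add[of R S "(-1) *\<^sub>R T"] vna_scaleR[of R T "-1"] by simp
lemma vna_zero: assumes "von_neumann_algebra R" shows "0 \<in> R"
  using vna_scaleR[OF assms vna_id[OF assms], of 0] by simp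

lemma bounded_op_comp: "bounded_op S \<Longrightarrow> bounded_op T \<Longrightarrow> bounded_op (S o\<^sub>L T)"
  unfolding bounded_op_def by simp

lemma opnorm_cinner: "cmod (cinner (blinfun_apply T x) y) \<le> norm T * norm x * norm y"
proof -
  have "cmod (cinner (blinfun_apply T x) y) \<le> norm (blinfun_apply T x) * norm y" by (rule cauchy_schwarz)
  also have "\<dots> \<le> norm T * norm x * norm y" by (simp add: mult_right_mono norm_blinfun)
  finally show ?thesis .
qed

lemma norm_adherent:
  fixes T :: "'h::chilbert_space \<Rightarrow>\<^sub>L 'h"
  assumes adh: "\<And>e. e > 0 \<Longrightarrow> \<exists>U\<in>S. norm (T - U) < e" and bS: "\<And>U. U \<in> S \<Longrightarrow> bounded_op U"
  shows "bounded_op T \<and> wot_adherent S T"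
proof
  show "bounded_op T" unfolding bounded_op_def
  proof (intro allI)
    fix c x
    let ?d = "norm (blinfun_apply T (scaleC c x) - scaleC c (blinfun_apply T x))"
    have "?d \<le> e * (norm (scaleC c x) + cmod c * norm x)" if e: "e > 0" for e
    proof -
      obtain U where U: "U \<in> S" "norm (T - U) < e" using adh[OF e] by blast
      have Uc: "blinfun_apply U (scaleC c x) = scaleC c (blinfun_apply U x)"
        using bS[OF U(1)] unfolding bounded_op_def by blast
      have "blinfun_apply T (scaleC c x) - scaleC c (blinfun_apply T x) =
          blinfun_apply (T - U) (scaleC c x) - scaleC c (blinfun_apply (T - U) x)"
        by (simp add: blinfun.diff_left Uc scaleC_add_right[symmetric] algebra_simps)
      then have "?d \<le> norm (blinfun_apply (T - U) (scaleC c x)) + norm (scaleC c (blinfun_apply (T - U) x))"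
        by (metis norm_triangle_ineq4)
      also have "\<dots> \<le> norm (T - U) * norm (scaleC c x) + cmod c * (norm (T - U) * norm x)"
        using norm_blinfun[of "T - U" "scaleC c x"] norm_blinfun[of "T - U" x]
        by (intro add_mono) (simp_all add: norm_scaleC mult_left_mono)
      also have "\<dots> \<le> e * norm (scaleC c x) + cmod c * (e * norm x)"
        using U(2) by (intro add_mono mult_right_mono mult_left_mono) auto
      finally show ?thesis by (simp add: algebra_simps)
    qed
    note bnd = this
    define K where "K = norm (scaleC c x) + cmod c * norm x"
    have K: "K \<ge> 0" by (simp add: K_def)
    have "?d \<le> 0 + e" if e: "e > 0" for e
    proof -
      have e': "e / (K + 1) > 0" using e K by simp
      have "?d \<le> e / (K + 1) * K" using bnd[OF e'] by (simp add: K_def)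
      also have "\<dots> \<le> e" using e K by (simp add: field_simps)
      finally show ?thesis by simp
    qed
    then have "?d \<le> 0" by (rule field_le_epsilon)
    then have "?d = 0" by simp
    then show "blinfun_apply T (scaleC c x) = scaleC c (blinfun_apply T x)" by simp
  qed
  show "wot_adherent S T" unfolding wot_adherent_def
  proof (intro allI impI)
    fix F :: "('h \<times> 'h) set" and e :: real
    assume e: "e > 0" and F: "finite F"
    define B where "B = (\<Sum>p\<in>F. norm (fst p) * norm (snd p)) + 1"
    have B0: "(\<Sum>p\<in>F. norm (fst p) * norm (snd p)) \<ge> 0" by (intro sum_nonneg) simp
    then have B: "B > 0" by (simp add: B_def)
    obtain U where U: "U \<in> S" "norm (T - U) < e / B" using adh[of "e / B"] e B by auto
    have "cmod (cinner (blinfun_apply T x - blinfun_apply U x) y) < e" if xy: "(x, y) \<in> F" for x y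
    proof -
      have xyB: "norm x * norm y \<le> B"
        using member_le_sum[of "(x,y)" F "\<lambda>p. norm (fst p) * norm (snd p)"] xy F
        by (simp add: B_def)
      have "cmod (cinner (blinfun_apply T x - blinfun_apply U x) y) = cmod (cinner (blinfun_apply (T - U) x) y)"
        by (simp add: blinfun.diff_left)
      also have "\<dots> \<le> norm (T - U) * (norm x * norm y)" using opnorm_cinner[of "T - U" x y] by (simp add: mult.assoc)
      also have "\<dots> \<le> norm (T - U) * B" by (rule mult_left_mono[OF xyB]) simp
      also have "\<dots> < e / B * B" using U(2) B by (intro mult_strict_right_mono) auto
      also have "\<dots> = e" using B by simp
      finally show ?thesis .
    qed
    then show "\<exists>U\<in>S. \<forall>(x, y)\<in>F. cmod (cinner (blinfun_apply T x - blinfun_apply U x) y) < e"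
      using U(1) by blast
  qed
qed



lemma cm_closed:
  fixes Y :: "'b::complete_space set"
  assumes "closed Y"
  shows "completely_metrizable_space (top_of_set Y)"
proof -
  have c: "closedin euclidean Y" using assms closed_closedin by blast
  show ?thesis using completely_metrizable_space_closedin[OF completely_metrizable_space_euclidean c] .
qed

lemma om_baire:
  fixes Y :: "'b::banach set"
  assumes Y: "closed Y" "0 \<in> Y" and cover: "\<And>y. y \<in> Y \<Longrightarrow> \<exists>n::nat. y \<in> G n"
    and G: "\<And>n. closed (G n)"
  shows "\<exists>n y0 r. r > 0 \<and> y0 \<in> Y \<and> (\<forall>y\<in>Y. dist y y0 < r \<longrightarrow> y \<in> G n)"
proof (rule ccontr)
  assume neg: "\<not> ?thesis"
  let ?X = "top_of_set Y"
  have cm: "completely_metrizable_space ?X" using cm_closed Y(1) by blast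
  let ?\<G> = "range (\<lambda>n. Y \<inter> G n)"
  have "?X interior_of \<Union>?\<G> = {}"
  proof (rule Baire_category_alt)
    show "completely_metrizable_space ?X \<or> locally_compact_space ?X \<and> regular_space ?X" using cm by simp
    show "countable ?\<G>" by simp
    fix T assume "T \<in> ?\<G>"
    then obtain n where T: "T = Y \<inter> G n" by auto
    show "closedin ?X T \<and> ?X interior_of T = {}"
    proof
      show "closedin ?X T" unfolding T using G[of n] by (rule closedin_closed_Int)
      show "?X interior_of T = {}"
      proof (clarsimp simp: interior_of_eq_empty)
        fix U assume U: "openin ?X U" "U \<subseteq> T"
        show "U = {}"
        proof (rule ccontr)
          assume "U \<noteq> {}"
          then obtain y0 where y0: "y0 \<in> U" by auto
          from U(1) obtain V where V: "open V" "U = Y \<inter> V" unfolding openin_open by blast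
          then obtain r where r: "r > 0" "ball y0 r \<subseteq> V" using y0 open_contains_ball by blast
          have "\<forall>y\<in>Y. dist y y0 < r \<longrightarrow> y \<in> G n"
          proof (intro ballI impI)
            fix y assume "y \<in> Y" "dist y y0 < r"
            then have "y \<in> ball y0 r" by (simp add: dist_commute)
            then have "y \<in> U" using V r \<open>y \<in> Y\<close> by blast
            then show "y \<in> G n" using U T by auto
          qed
          moreover have "y0 \<in> Y" using y0 V by auto
          ultimately show False using neg r by blast
        qed
      qed
    qed
  qed
  moreover have "\<Union>?\<G> = Y" using cover by auto
  ultimately have "Y = {}" by (metis interior_of_topspace topspace_euclidean_subtopology)
  then show False using Y by simp
qed


lemma om_iter:
  fixes L :: "'a::banach \<Rightarrow> 'b::banach" and X :: "'a set"
  assumes lin: "bounded_linear L" and Xc: "closed X" and X0: "0 \<in> X"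
    and Xadd: "\<And>x y. x\<in>X \<Longrightarrow> y\<in>X \<Longrightarrow> x + y \<in> X"
    and Xdiff: "\<And>x y. x\<in>X \<Longrightarrow> y\<in>X \<Longrightarrow> x - y \<in> X"
    and c: "c > 0"
    and approx: "\<And>y \<delta>. y \<in> L ` X \<Longrightarrow> \<delta> > 0 \<Longrightarrow> \<exists>x\<in>X. norm x \<le> c * norm y \<and> norm (y - L x) < \<delta>"
    and y: "y \<in> L ` X"
  shows "\<exists>x\<in>X. L x = y \<and> norm x \<le> 2 * c * norm y"
proof (cases "y = 0")
  case True
  have "L 0 = 0" using lin by (simp add: bounded_linear.linear linear_0)
  then show ?thesis using X0 True by (intro bexI[of _ 0]) auto
next
  case False
  define ny where "ny = norm y"
  have ny: "ny > 0" using False by (simp add: ny_def)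
  have Ydiff: "L a - L b \<in> L ` X" if "a \<in> X" "b \<in> X" for a b
    using that Xdiff lin by (metis linear_diff bounded_linear.linear image_eqI)
  define P where "P = (\<lambda>z k x. x \<in> X \<and> norm x \<le> c * norm z \<and> norm (z - L x) < ny / 2 ^ Suc k)"
  define g where "g = (\<lambda>z k. SOME x. P z k x)"
  have g: "P z k (g z k)" if "z \<in> L ` X" for z k
  proof -
    have "\<exists>x. P z k x" using approx[OF that, of "ny / 2 ^ Suc k"] ny unfolding P_def by auto
    then show ?thesis unfolding g_def by (rule someI_ex)
  qed
  define z where "z = rec_nat y (\<lambda>k zk. zk - L (g zk k))"
  have z0: "z 0 = y" and zS: "z (Suc k) = z k - L (g (z k) k)" for k by (simp_all add: z_def)
  have zY: "z k \<in> L ` X" for k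
  proof (induction k)
    case 0 then show ?case using y z0 by simp
  next
    case (Suc k)
    then obtain a where a: "a \<in> X" "z k = L a" by auto
    have "g (z k) k \<in> X" using g[OF Suc] unfolding P_def by simp
    then have "L a - L (g (z k) k) \<in> L ` X" using Ydiff a(1) by blast
    then show ?case unfolding zS a(2) .
  qed
  define x where "x = (\<lambda>k. g (z k) k)"
  have xX: "x k \<in> X" for k using g[OF zY] unfolding P_def x_def by simp
  have zSn: "norm (z (Suc k)) < ny / 2 ^ Suc k" for k
    using g[OF zY, of k k] unfolding P_def zS by simp
  have zn: "norm (z k) \<le> ny / 2 ^ k" for k
  proof (cases k)
    case 0 then show ?thesis by (simp add: z0 ny_def)
  next
    case (Suc m) then show ?thesis using zSn[of m] by simp
  qed
  have xn: "norm (x k) \<le> c * ny * (1/2) ^ k" for k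
  proof -
    have "norm (x k) \<le> c * norm (z k)" using g[OF zY, of k k] unfolding P_def x_def by simp
    also have "\<dots> \<le> c * (ny / 2 ^ k)" using zn[of k] c by (intro mult_left_mono) auto
    finally show ?thesis by (simp add: power_divide)
  qed
  have sg: "summable (\<lambda>k. c * ny * (1/2::real) ^ k)"
    by (intro summable_mult summable_geometric) simp
  have sx: "summable x" by (rule summable_comparison_test'[OF sg]) (use xn in simp)
  have snx: "summable (\<lambda>k. norm (x k))" by (rule summable_comparison_test'[OF sg]) (use xn in simp)
  have psum: "(\<Sum>k<N. L (x k)) = y - z N" for N
  proof (induction N)
    case 0 then show ?case by (simp add: z0)
  next
    case (Suc N) then show ?case by (simp add: zS x_def)
  qed
  have "(\<lambda>N. z N) \<longlonglongrightarrow> 0"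
  proof (rule Lim_null_comparison)
    show "\<forall>\<^sub>F N in sequentially. norm (z N) \<le> ny / 2 ^ N" using zn by simp
    show "(\<lambda>N. ny / 2 ^ N) \<longlonglongrightarrow> 0" by (rule LIMSEQ_divide_realpow_zero) simp
  qed
  then have "(\<lambda>N. y - z N) \<longlonglongrightarrow> y - 0" by (intro tendsto_intros)
  then have "(\<lambda>k. L (x k)) sums y" unfolding sums_def psum by simp
  moreover have "L (suminf x) = (\<Sum>k. L (x k))" using bounded_linear.suminf[OF lin sx] .
  ultimately have Ls: "L (suminf x) = y" by (simp add: sums_iff)
  have lim: "(\<lambda>N. \<Sum>k<N. x k) \<longlonglongrightarrow> suminf x" by (rule summable_LIMSEQ[OF sx])
  have inX: "(\<Sum>k<N. x k) \<in> X" for N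
    by (induction N) (simp_all add: X0 Xadd xX)
  have sX: "suminf x \<in> X" by (rule closed_sequentially[OF Xc inX lim])
  have "norm (suminf x) \<le> (\<Sum>k. norm (x k))" by (rule summable_norm[OF snx])
  also have "\<dots> \<le> (\<Sum>k. c * ny * (1/2::real) ^ k)" by (rule suminf_le[OF xn snx sg])
  also have "\<dots> = 2 * c * ny" using suminf_mult[of "\<lambda>k. (1/2::real)^k" "c * ny"] suminf_geometric[of "1/2::real"]
    by simp
  finally show ?thesis using sX Ls unfolding ny_def by blast
qed


lemma open_mapping_bound:
  fixes L :: "'a::banach \<Rightarrow> 'b::banach" and X :: "'a set"
  assumes lin: "bounded_linear L" and Xc: "closed X" and X0: "0 \<in> X"
    and Xadd: "\<And>x y. x\<in>X \<Longrightarrow> y\<in>X \<Longrightarrow> x + y \<in> X"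
    and Xdiff: "\<And>x y. x\<in>X \<Longrightarrow> y\<in>X \<Longrightarrow> x - y \<in> X"
    and Xscale: "\<And>r x. x\<in>X \<Longrightarrow> r *\<^sub>R x \<in> X"
    and Yc: "closed (L ` X)"
  shows "\<exists>C>0. \<forall>y\<in>L ` X. \<exists>x\<in>X. L x = y \<and> norm x \<le> C * norm y"
proof -
  have linL: "linear L" using lin by (rule bounded_linear.linear)
  define G where "G = (\<lambda>n::nat. closure (L ` (X \<inter> cball 0 (real n))))"
  have L0: "L 0 = 0" using linL by (rule linear_0)
  have "\<exists>n y0 r. r > 0 \<and> y0 \<in> L ` X \<and> (\<forall>y\<in>L ` X. dist y y0 < r \<longrightarrow> y \<in> G n)"
  proof (rule om_baire)
    show "closed (L ` X)" by (rule Yc)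
    show "0 \<in> L ` X" using X0 L0 by (metis image_eqI)
    show "closed (G n)" for n unfolding G_def by simp
    fix y assume "y \<in> L ` X"
    then obtain x where x: "x \<in> X" "y = L x" by auto
    obtain n::nat where "norm x \<le> real n" using real_arch_simple by blast
    then have "x \<in> X \<inter> cball 0 (real n)" using x(1) by simp
    then have "y \<in> L ` (X \<inter> cball 0 (real n))" by (rule image_eqI[where f=L, OF x(2)])
    then have "y \<in> G n" unfolding G_def by (rule subsetD[OF closure_subset])
    then show "\<exists>n. y \<in> G n" by blast
  qed
  then obtain n y0 r where r: "r > 0" and y0: "y0 \<in> L ` X"
    and ball: "\<And>y. y \<in> L ` X \<Longrightarrow> dist y y0 < r \<Longrightarrow> y \<in> G n" by blast
  have Yadd: "a + b \<in> L ` X" if ab: "a \<in> L ` X" "b \<in> L ` X" for a b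
  proof -
    obtain u where u: "u \<in> X" "a = L u" using ab(1) by blast
    obtain v where v: "v \<in> X" "b = L v" using ab(2) by blast
    note uv = u(1) v(1) u(2) v(2)
    have "a + b = L (u + v)" using uv linear_add[OF linL] by simp
    then show ?thesis by (rule image_eqI[where f=L, OF _ Xadd[OF uv(1,2)]])
  qed
  have Yscale: "r *\<^sub>R a \<in> L ` X" if a: "a \<in> L ` X" for a r
  proof -
    obtain u where u: "u \<in> X" "a = L u" using a by blast
    have "r *\<^sub>R a = L (r *\<^sub>R u)" using u linear_scale[OF linL] by simp
    then show ?thesis by (rule image_eqI[where f=L, OF _ Xscale[OF u(1)]])
  qed
  have approx1: "\<exists>x\<in>X. norm x \<le> 2 * real n \<and> norm (y - L x) < \<delta>"
    if y: "y \<in> L ` X" "norm y < r" and d: "\<delta> > 0" for y \<delta>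
  proof -
    have "y0 + y \<in> G n" using ball[OF Yadd[OF y0 y(1)]] y(2) by (simp add: dist_norm)
    then obtain w1 where w1: "w1 \<in> L ` (X \<inter> cball 0 (real n))" "dist w1 (y0 + y) < \<delta>/2"
      unfolding G_def closure_approachable using d by (meson half_gt_zero)
    have "y0 \<in> G n" using ball[OF y0] r by simp
    then obtain w2 where w2: "w2 \<in> L ` (X \<inter> cball 0 (real n))" "dist w2 y0 < \<delta>/2"
      unfolding G_def closure_approachable using d by (meson half_gt_zero)
    obtain x1 where x1: "x1 \<in> X" "norm x1 \<le> real n" "w1 = L x1" using w1(1) by auto
    obtain x2 where x2: "x2 \<in> X" "norm x2 \<le> real n" "w2 = L x2" using w2(1) by auto
    have "norm (x1 - x2) \<le> 2 * real n" using x1(2) x2(2) norm_triangle_ineq4[of x1 x2] by linarith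
    moreover have "norm (y - L (x1 - x2)) < \<delta>"
    proof -
      have "y - L (x1 - x2) = (y0 + y - w1) - (y0 - w2)" using x1(3) x2(3) linear_diff[OF linL] by simp
      then have "norm (y - L (x1 - x2)) \<le> norm (y0 + y - w1) + norm (y0 - w2)"
        by (metis norm_triangle_ineq4)
      also have "\<dots> < \<delta>/2 + \<delta>/2" using w1(2) w2(2) by (simp add: dist_norm norm_minus_commute add_strict_mono)
      finally show ?thesis by simp
    qed
    ultimately show ?thesis using Xdiff[OF x1(1) x2(1)] by blast
  qed
  define c where "c = 4 * real n / r + 1"
  have "4 * real n / r \<ge> 0" using r by simp
  then have c: "c > 0" unfolding c_def by linarith
  have approx: "\<exists>x\<in>X. norm x \<le> c * norm y \<and> norm (y - L x) < \<delta>"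
    if y: "y \<in> L ` X" and d: "\<delta> > 0" for y \<delta>
  proof (cases "y = 0")
    case True then show ?thesis using X0 L0 d by (intro bexI[of _ 0]) auto
  next
    case False
    define s where "s = r / (2 * norm y)"
    have s: "s > 0" using False r by (simp add: s_def)
    have "norm (s *\<^sub>R y) < r" using False r by (simp add: s_def)
    then obtain x' where x': "x' \<in> X" "norm x' \<le> 2 * real n" "norm (s *\<^sub>R y - L x') < s * \<delta>"
      using approx1[OF Yscale[OF y] _ mult_pos_pos[OF s d]] by blast
    define x where "x = (1/s) *\<^sub>R x'"
    have "x \<in> X" unfolding x_def using Xscale x'(1) by blast
    moreover have "norm x \<le> c * norm y"
    proof -
      have "norm x = norm x' / s" using s by (simp add: x_def)
      also have "\<dots> \<le> 2 * real n / s" using x'(2) s by (simp add: divide_right_mono)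
      also have "2 * real n / s = 4 * real n / r * norm y" using False r by (simp add: s_def field_simps)
      also have "\<dots> \<le> c * norm y" by (simp add: c_def distrib_right)
      finally show ?thesis .
    qed
    moreover have "norm (y - L x) < \<delta>"
    proof -
      have "s *\<^sub>R y - L x' = s *\<^sub>R (y - L x)"
        using s by (simp add: x_def linear_scale[OF linL] scaleR_diff_right)
      then have "norm (s *\<^sub>R y - L x') = s * norm (y - L x)" using s by simp
      then show ?thesis using x'(3) s by simp
    qed
    ultimately show ?thesis by blast
  qed
  have "\<forall>y\<in>L ` X. \<exists>x\<in>X. L x = y \<and> norm x \<le> 2 * c * norm y"
  proof
    fix y assume "y \<in> L ` X"
    then show "\<exists>x\<in>X. L x = y \<and> norm x \<le> 2 * c * norm y"
      using om_iter[OF lin Xc X0 Xadd Xdiff c approx] by blast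
  qed
  moreover have "2 * c > 0" using c by simp
  ultimately show ?thesis by blast
qed



lemma closure_adh:
  fixes x :: "'a::real_normed_vector"
  assumes "x \<in> closure S" "e > 0" shows "\<exists>U\<in>S. norm (x - U) < e"
  using assms unfolding closure_approachable by (metis dist_norm norm_minus_commute)

lemma closed_if_adh:
  fixes S :: "('h::chilbert_space \<Rightarrow>\<^sub>L 'h) set"
  assumes bS: "\<And>U. U \<in> S \<Longrightarrow> bounded_op U" and W: "wot_closed S"
  shows "closed S"
proof -
  have "closure S \<subseteq> S"
  proof
    fix T assume T: "T \<in> closure S"
    have "bounded_op T \<and> wot_adherent S T"
      by (rule norm_adherent) (use closure_adh[OF T] bS in auto)
    then show "T \<in> S" using W unfolding wot_closed_def by blast
  qed
  then show ?thesis by (simp add: closure_subset_eq)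
qed

lemma vna_closed: "von_neumann_algebra R \<Longrightarrow> closed R"
  by (rule closed_if_adh) (simp_all add: vna_bounded vna_wot)

lemma lms_sub: "von_neumann_algebra R \<Longrightarrow> A \<in> R \<Longrightarrow> left_mult_set R A \<subseteq> R"
  unfolding left_mult_set_def using vna_comp by blast

lemma wot_adh_mono: "S \<subseteq> S' \<Longrightarrow> wot_adherent S T \<Longrightarrow> wot_adherent S' T"
  unfolding wot_adherent_def by (meson subsetD)

lemma wot_adh_ker:
  assumes adh: "wot_adherent (left_mult_set R A) S" and Av: "blinfun_apply A v = 0"
  shows "blinfun_apply S v = 0"
proof -
  have "(norm (blinfun_apply S v))\<^sup>2 \<le> 0 + e" if e: "e > 0" for e
  proof -
    obtain U where U: "U \<in> left_mult_set R A"
      "\<forall>(x, y)\<in>{(v, blinfun_apply S v)}. cmod (cinner (blinfun_apply S x - blinfun_apply U x) y) < e"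
      using adh e unfolding wot_adherent_def by (meson finite.emptyI finite.insertI)
    then obtain T where "U = T o\<^sub>L A" unfolding left_mult_set_def by blast
    then have "blinfun_apply U v = 0" using Av by simp
    then have "cmod (cinner (blinfun_apply S v) (blinfun_apply S v)) < e" using U(2) by simp
    moreover have "cmod (cinner (blinfun_apply S v) (blinfun_apply S v)) = (norm (blinfun_apply S v))\<^sup>2"
      by (simp only: cinner_self norm_of_real) simp
    ultimately show ?thesis by simp
  qed
  then have "(norm (blinfun_apply S v))\<^sup>2 \<le> 0" by (rule field_le_epsilon)
  then show ?thesis by simp
qed



lemma contr:
  fixes x b :: "'a::complex_inner"
  assumes re: "Re (cinner x b) = c\<^sup>2" and nb: "norm b \<le> m * c" and mM: "m\<^sup>2 \<le> M"
    and M: "M > 0" and m: "m \<ge> 0" and c: "c \<ge> 0"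
  shows "(norm (x - (1/M) *\<^sub>R b))\<^sup>2 \<le> (norm x)\<^sup>2 - c\<^sup>2 / M"
proof -
  have 1: "Re (cinner x ((1/M) *\<^sub>R b)) = c\<^sup>2 / M" using re by (simp add: cinner_scaleR_right)
  have "(norm b)\<^sup>2 \<le> (m * c)\<^sup>2" using nb by (simp add: power_mono)
  also have "\<dots> = m\<^sup>2 * c\<^sup>2" by (simp add: power_mult_distrib)
  also have "\<dots> \<le> M * c\<^sup>2" using mM by (simp add: mult_right_mono)
  finally have nb2: "(norm b)\<^sup>2 \<le> M * c\<^sup>2" .
  have 2: "(norm ((1/M) *\<^sub>R b))\<^sup>2 \<le> c\<^sup>2 / M"
  proof -
    have "(norm ((1/M) *\<^sub>R b))\<^sup>2 = (norm b)\<^sup>2 / M\<^sup>2" using M by (simp add: power_divide)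
    also have "\<dots> \<le> M * c\<^sup>2 / M\<^sup>2" using nb2 M by (simp add: divide_right_mono)
    also have "\<dots> = c\<^sup>2 / M" using M by (simp add: power2_eq_square)
    finally show ?thesis .
  qed
  show ?thesis using norm_diff_sq[of x "(1/M) *\<^sub>R b"] 1 2 by simp
qed

lemma le_minus_nonneg: "0 \<le> (t::real) \<Longrightarrow> a \<le> b - t \<Longrightarrow> a \<le> b" by linarith

primrec opow :: "('a::real_normed_vector \<Rightarrow>\<^sub>L 'a) \<Rightarrow> nat \<Rightarrow> ('a \<Rightarrow>\<^sub>L 'a)" where
  "opow T 0 = id_blinfun"
| "opow T (Suc n) = T o\<^sub>L opow T n"

lemma opow_in: "von_neumann_algebra R \<Longrightarrow> T \<in> R \<Longrightarrow> opow T n \<in> R"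
  by (induction n) (simp_all add: vna_id vna_comp)

lemma opow_add_apply: "blinfun_apply (opow T (m + n)) x = blinfun_apply (opow T m) (blinfun_apply (opow T n) x)"
  by (induction m) simp_all

lemma opow_Suc': "blinfun_apply (opow T (Suc n)) x = blinfun_apply (opow T n) (blinfun_apply T x)"
  using opow_add_apply[of T n 1 x] by simp


locale keyctx =
  fixes R :: "('h::chilbert_space \<Rightarrow>\<^sub>L 'h) set" and A Ad K K' :: "'h \<Rightarrow>\<^sub>L 'h" and M :: real
  assumes V: "von_neumann_algebra R" and AR: "A \<in> R" and AdR: "Ad \<in> R"
    and adj1: "\<And>x y. cinner (blinfun_apply A x) y = cinner x (blinfun_apply Ad y)"
    and M_def: "M = (norm A)\<^sup>2 + (norm Ad)\<^sup>2 + 1"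
    and K_def: "K = id_blinfun - (1/M) *\<^sub>R (Ad o\<^sub>L A)"
    and K'_def: "K' = id_blinfun - (1/M) *\<^sub>R (A o\<^sub>L Ad)"
begin

lemma adj2: "cinner (blinfun_apply Ad x) y = cinner x (blinfun_apply A y)"
proof -
  have "cinner (blinfun_apply Ad x) y = cnj (cinner y (blinfun_apply Ad x))" by (rule cinner_commute)
  also have "\<dots> = cnj (cinner (blinfun_apply A y) x)" by (simp add: adj1)
  also have "\<dots> = cinner x (blinfun_apply A y)" by (simp add: cinner_commute[of x])
  finally show ?thesis .
qed

lemma M_pos: "M > 0" unfolding M_def by (simp add: add_nonneg_pos)

lemma KR: "K \<in> R" unfolding K_def
  by (intro vna_diff[OF V] vna_id[OF V] vna_scaleR[OF V] vna_comp[OF V] AR AdR)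

lemma K'R: "K' \<in> R" unfolding K'_def
  by (intro vna_diff[OF V] vna_id[OF V] vna_scaleR[OF V] vna_comp[OF V] AR AdR)

lemma K_apply: "blinfun_apply K x = x - (1/M) *\<^sub>R blinfun_apply Ad (blinfun_apply A x)"
  unfolding K_def by (simp add: blinfun.diff_left scaleR_blinfun.rep_eq)

lemma K'_apply: "blinfun_apply K' x = x - (1/M) *\<^sub>R blinfun_apply A (blinfun_apply Ad x)"
  unfolding K'_def by (simp add: blinfun.diff_left scaleR_blinfun.rep_eq)

lemma K_sq: "(norm (blinfun_apply K x))\<^sup>2 \<le> (norm x)\<^sup>2 - (norm (blinfun_apply A x))\<^sup>2 / M"
  unfolding K_apply
proof (rule contr[where m = "norm Ad"])
  show "Re (cinner x (blinfun_apply Ad (blinfun_apply A x))) = (norm (blinfun_apply A x))\<^sup>2"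
    by (simp add: adj1[symmetric] cinner_self)
  show "norm (blinfun_apply Ad (blinfun_apply A x)) \<le> norm Ad * norm (blinfun_apply A x)"
    by (rule norm_blinfun)
  show "(norm Ad)\<^sup>2 \<le> M" unfolding M_def by simp
qed (simp_all add: M_pos)

lemma K'_sq: "(norm (blinfun_apply K' x))\<^sup>2 \<le> (norm x)\<^sup>2 - (norm (blinfun_apply Ad x))\<^sup>2 / M"
  unfolding K'_apply
proof (rule contr[where m = "norm A"])
  show "Re (cinner x (blinfun_apply A (blinfun_apply Ad x))) = (norm (blinfun_apply Ad x))\<^sup>2"
    by (simp add: adj2[symmetric] cinner_self)
  show "norm (blinfun_apply A (blinfun_apply Ad x)) \<le> norm A * norm (blinfun_apply Ad x)"
    by (rule norm_blinfun)
  show "(norm A)\<^sup>2 \<le> M" unfolding M_def by simp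
qed (simp_all add: M_pos)

lemma K_le: "norm (blinfun_apply K x) \<le> norm x"
proof -
  have "(norm (blinfun_apply K x))\<^sup>2 \<le> (norm x)\<^sup>2"
  proof -
    have "(norm (blinfun_apply A x))\<^sup>2 / M \<ge> 0" using M_pos by simp
    then show ?thesis by (rule le_minus_nonneg[OF _ K_sq[of x]])
  qed
  then show ?thesis by (rule power2_le_imp_le) simp
qed

lemma K'_le: "norm (blinfun_apply K' x) \<le> norm x"
proof -
  have "(norm (blinfun_apply K' x))\<^sup>2 \<le> (norm x)\<^sup>2"
  proof -
    have "(norm (blinfun_apply Ad x))\<^sup>2 / M \<ge> 0" using M_pos by simp
    then show ?thesis by (rule le_minus_nonneg[OF _ K'_sq[of x]])
  qed
  then show ?thesis by (rule power2_le_imp_le) simp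
qed

lemma intertw: "blinfun_apply A (blinfun_apply K x) = blinfun_apply K' (blinfun_apply A x)"
  by (simp add: K_apply K'_apply blinfun.diff_right blinfun.scaleR_right)

lemma opow_le: "norm (blinfun_apply (opow K n) x) \<le> norm x"
proof (induction n)
  case (Suc n) then show ?case using K_le[of "blinfun_apply (opow K n) x"] by simp
qed simp

lemma A_opow_dec: "norm (blinfun_apply A (blinfun_apply (opow K (Suc n)) x)) \<le> norm (blinfun_apply A (blinfun_apply (opow K n) x))"
  using K'_le[of "blinfun_apply A (blinfun_apply (opow K n) x)"] by (simp add: intertw)

lemma A_opow_mono: "j \<le> n \<Longrightarrow> norm (blinfun_apply A (blinfun_apply (opow K n) x)) \<le> norm (blinfun_apply A (blinfun_apply (opow K j) x))"
  by (rule lift_Suc_antimono_le[of "\<lambda>n. norm (blinfun_apply A (blinfun_apply (opow K n) x))"]) (use A_opow_dec in auto)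

lemma sum_bound: "(\<Sum>j<n. (norm (blinfun_apply A (blinfun_apply (opow K j) x)))\<^sup>2) \<le> M * ((norm x)\<^sup>2 - (norm (blinfun_apply (opow K n) x))\<^sup>2)"
proof (induction n)
  case 0 then show ?case by simp
next
  case (Suc n)
  let ?w = "blinfun_apply (opow K n) x"
  have "(norm (blinfun_apply K ?w))\<^sup>2 \<le> (norm ?w)\<^sup>2 - (norm (blinfun_apply A ?w))\<^sup>2 / M" by (rule K_sq)
  then have "(norm (blinfun_apply A ?w))\<^sup>2 \<le> M * ((norm ?w)\<^sup>2 - (norm (blinfun_apply K ?w))\<^sup>2)"
    using M_pos by (simp add: field_simps)
  then show ?case using Suc by (simp add: algebra_simps)
qed

lemma A_opow_bound: "real n * (norm (blinfun_apply A (blinfun_apply (opow K n) x)))\<^sup>2 \<le> M * (norm x)\<^sup>2"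
proof -
  have "real n * (norm (blinfun_apply A (blinfun_apply (opow K n) x)))\<^sup>2 =
      (\<Sum>j<n. (norm (blinfun_apply A (blinfun_apply (opow K n) x)))\<^sup>2)" by simp
  also have "\<dots> \<le> (\<Sum>j<n. (norm (blinfun_apply A (blinfun_apply (opow K j) x)))\<^sup>2)"
    by (intro sum_mono power_mono A_opow_mono) auto
  also have "\<dots> \<le> M * ((norm x)\<^sup>2 - (norm (blinfun_apply (opow K n) x))\<^sup>2)" by (rule sum_bound)
  also have "\<dots> \<le> M * (norm x)\<^sup>2" using M_pos by (simp add: mult_left_mono)
  finally show ?thesis .
qed

lemma A_opow_sqrt: assumes "n \<ge> 1"
  shows "norm (blinfun_apply A (blinfun_apply (opow K n) x)) \<le> sqrt (M / real n) * norm x"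
proof -
  have n: "real n > 0" using assms by simp
  have "(norm (blinfun_apply A (blinfun_apply (opow K n) x)))\<^sup>2 \<le> M / real n * (norm x)\<^sup>2"
    using A_opow_bound[of n x] n by (simp add: field_simps)
  also have "\<dots> = (sqrt (M / real n) * norm x)\<^sup>2" using M_pos n by (simp add: power_mult_distrib)
  finally show ?thesis by (rule power2_le_imp_le) (use M_pos n in simp)
qed

lemma Tn_exists: "\<exists>T\<in>R. id_blinfun - opow K n = T o\<^sub>L A"
proof (induction n)
  case 0
  have "id_blinfun - opow K 0 = 0 o\<^sub>L A" by (rule blinfun_eqI) simp
  then show ?case using vna_zero[OF V] by blast
next
  case (Suc n)
  then obtain T where T: "T \<in> R" "id_blinfun - opow K n = T o\<^sub>L A" by blast
  define T' where "T' = (1/M) *\<^sub>R Ad + (T o\<^sub>L K')"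
  have T'R: "T' \<in> R" unfolding T'_def
    by (intro vna_add[OF V] vna_scaleR[OF V] vna_comp[OF V] AdR T(1) K'R)
  have "id_blinfun - opow K (Suc n) = T' o\<^sub>L A"
  proof (rule blinfun_eqI)
    fix x
    have IH: "blinfun_apply K x - blinfun_apply (opow K n) (blinfun_apply K x) = blinfun_apply T (blinfun_apply A (blinfun_apply K x))"
      using arg_cong[OF T(2), of "\<lambda>U. blinfun_apply U (blinfun_apply K x)"] by (simp add: blinfun.diff_left)
    have "blinfun_apply (id_blinfun - opow K (Suc n)) x = x - blinfun_apply (opow K n) (blinfun_apply K x)"
      by (simp only: blinfun.diff_left opow_Suc' blinfun_apply_id_blinfun)
    also have "\<dots> = (x - blinfun_apply K x) + (blinfun_apply K x - blinfun_apply (opow K n) (blinfun_apply K x))"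
      by simp
    also have "\<dots> = (1/M) *\<^sub>R blinfun_apply Ad (blinfun_apply A x) + blinfun_apply T (blinfun_apply K' (blinfun_apply A x))"
      unfolding IH by (simp add: K_apply intertw[symmetric])
    also have "\<dots> = blinfun_apply (T' o\<^sub>L A) x"
      by (simp add: T'_def blinfun.add_left scaleR_blinfun.rep_eq)
    finally show "blinfun_apply (id_blinfun - opow K (Suc n)) x = blinfun_apply (T' o\<^sub>L A) x" .
  qed
  then show ?case using T'R by blast
qed

lemma id_minus_opow_norm: "norm (id_blinfun - opow K n) \<le> 2"
proof (rule norm_blinfun_bound)
  fix x
  have "norm (blinfun_apply (id_blinfun - opow K n) x) = norm (x - blinfun_apply (opow K n) x)"
    by (simp add: blinfun.diff_left)
  also have "\<dots> \<le> norm x + norm (blinfun_apply (opow K n) x)" by (rule norm_triangle_ineq4)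
  also have "\<dots> \<le> 2 * norm x" using opow_le[of n x] by simp
  finally show "norm (blinfun_apply (id_blinfun - opow K n) x) \<le> 2 * norm x" .
qed simp

lemma key_loc:
  assumes C: "closed (left_mult_set R A)"
  shows "\<exists>F\<in>left_mult_set R A. \<forall>z. blinfun_apply A (z - blinfun_apply F z) = 0"
proof -
  have L: "bounded_linear (\<lambda>T. T o\<^sub>L A)"
    by (rule bounded_bilinear.bounded_linear_left[OF bounded_bilinear_blinfun_compose])
  have img: "(\<lambda>T. T o\<^sub>L A) ` R = left_mult_set R A" by (simp add: left_mult_set_def)
  obtain C where C0: "C > 0" and Cb: "\<forall>y\<in>(\<lambda>T. T o\<^sub>L A) ` R. \<exists>x\<in>R. x o\<^sub>L A = y \<and> norm x \<le> C * norm y"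
    using open_mapping_bound[OF L vna_closed[OF V] vna_zero[OF V] vna_add[OF V] vna_diff[OF V] vna_scaleR[OF V]] C img
    by auto
  have gap: "norm (w - blinfun_apply (opow K k) w) \<le> 2 * C * norm (blinfun_apply A w)" for k w
  proof -
    obtain T where T: "T \<in> R" "id_blinfun - opow K k = T o\<^sub>L A" using Tn_exists by blast
    obtain T' where T': "T' \<in> R" "T' o\<^sub>L A = T o\<^sub>L A" "norm T' \<le> C * norm (T o\<^sub>L A)"
      using Cb T(1) by blast
    have "w - blinfun_apply (opow K k) w = blinfun_apply (T' o\<^sub>L A) w"
      using arg_cong[OF T(2), of "\<lambda>U. blinfun_apply U w"] T'(2) by (simp add: blinfun.diff_left)
    also have "norm \<dots> \<le> norm T' * norm (blinfun_apply A w)" by (simp add: norm_blinfun)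
    also have "\<dots> \<le> C * norm (T o\<^sub>L A) * norm (blinfun_apply A w)" by (rule mult_right_mono[OF T'(3)]) simp
    also have "\<dots> \<le> C * 2 * norm (blinfun_apply A w)"
      using id_minus_opow_norm[of k] T(2) C0 by (intro mult_right_mono mult_left_mono) auto
    finally show ?thesis by simp
  qed
  define \<beta> where "\<beta> = (\<lambda>n. 2 * C * sqrt (M / real n))"
  have est: "norm (opow K n - opow K m) \<le> \<beta> n" if nm: "1 \<le> n" "n \<le> m" for n m
  proof (rule norm_blinfun_bound)
    show "0 \<le> \<beta> n" unfolding \<beta>_def using C0 M_pos by simp
    fix x
    define w where "w = blinfun_apply (opow K n) x"
    have "blinfun_apply (opow K m) x = blinfun_apply (opow K (m - n)) w"
      using opow_add_apply[of K "m - n" n x] nm by (simp add: w_def)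
    then have "norm (blinfun_apply (opow K n - opow K m) x) = norm (w - blinfun_apply (opow K (m - n)) w)"
      by (simp add: blinfun.diff_left w_def)
    also have "\<dots> \<le> 2 * C * norm (blinfun_apply A w)" by (rule gap)
    also have "\<dots> \<le> 2 * C * (sqrt (M / real n) * norm x)"
      using A_opow_sqrt[OF nm(1), of x] C0 by (simp add: w_def)
    finally show "norm (blinfun_apply (opow K n - opow K m) x) \<le> \<beta> n * norm x" by (simp add: \<beta>_def)
  qed
  have \<beta>0: "\<beta> \<longlonglongrightarrow> 0"
  proof -
    have "(\<lambda>n. 2 * C * sqrt (M / real n)) \<longlonglongrightarrow> 2 * C * sqrt 0"
      by (intro tendsto_intros)
    then show ?thesis by (simp add: \<beta>_def)
  qed
  have "Cauchy (\<lambda>n. opow K n)"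
  proof (rule CauchyI)
    fix e :: real assume e: "e > 0"
    have "\<forall>\<^sub>F n in sequentially. \<beta> n < e" using order_tendstoD(2)[OF \<beta>0 e] .
    then obtain N0 where N0: "\<And>n. n \<ge> N0 \<Longrightarrow> \<beta> n < e" unfolding eventually_sequentially by blast
    show "\<exists>N. \<forall>m\<ge>N. \<forall>n\<ge>N. norm (opow K m - opow K n) < e"
    proof (intro exI allI impI)
      fix m n assume m: "max N0 1 \<le> m" and n: "max N0 1 \<le> n"
      show "norm (opow K m - opow K n) < e"
      proof (cases "m \<le> n")
        case True
        then show ?thesis using est[of m n] N0[of m] m by simp
      next
        case False
        then have "norm (opow K n - opow K m) < e" using est[of n m] N0[of n] n by simp
        then show ?thesis by (simp add: norm_minus_commute)
      qed
    qed
  qed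
  then obtain E0 where E0: "(\<lambda>n. opow K n) \<longlonglongrightarrow> E0"
    unfolding Cauchy_convergent_iff convergent_def by blast
  have lim: "(\<lambda>n. id_blinfun - opow K n) \<longlonglongrightarrow> id_blinfun - E0" by (intro tendsto_intros E0)
  have inS: "id_blinfun - opow K n \<in> left_mult_set R A" for n
    using Tn_exists[of n] unfolding left_mult_set_def by blast
  have Fin: "id_blinfun - E0 \<in> left_mult_set R A"
    by (rule closed_sequentially[OF C inS lim])
  have AE0: "blinfun_apply A (blinfun_apply E0 z) = 0" for z
  proof -
    have l1: "(\<lambda>n. blinfun_apply A (blinfun_apply (opow K n) z)) \<longlonglongrightarrow> blinfun_apply A (blinfun_apply E0 z)"
      by (intro tendsto_intros E0)
    have l2: "(\<lambda>n. blinfun_apply A (blinfun_apply (opow K n) z)) \<longlonglongrightarrow> 0"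
    proof (rule Lim_null_comparison)
      show "\<forall>\<^sub>F n in sequentially. norm (blinfun_apply A (blinfun_apply (opow K n) z)) \<le> sqrt (M / real n) * norm z"
        unfolding eventually_sequentially using A_opow_sqrt by blast
      have "(\<lambda>n. sqrt (M / real n) * norm z) \<longlonglongrightarrow> sqrt 0 * norm z" by (intro tendsto_intros)
      then show "(\<lambda>n. sqrt (M / real n) * norm z) \<longlonglongrightarrow> 0" by simp
    qed
    show ?thesis using LIMSEQ_unique[OF l1 l2] .
  qed
  show ?thesis
  proof (intro bexI[OF _ Fin] allI)
    fix z
    show "blinfun_apply A (z - blinfun_apply (id_blinfun - E0) z) = 0"
      using AE0[of z] by (simp add: blinfun.diff_left)
  qed
qed

end

lemma key:
  fixes R :: "('h::chilbert_space \<Rightarrow>\<^sub>L 'h) set" and A :: "'h \<Rightarrow>\<^sub>L 'h"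
  assumes V: "von_neumann_algebra R" and A: "A \<in> R" and C: "closed (left_mult_set R A)"
  shows "\<exists>F\<in>left_mult_set R A. \<forall>z. blinfun_apply A (z - blinfun_apply F z) = 0"
proof -
  obtain Ad where Ad: "Ad \<in> R" "is_adjoint A Ad" using vna_adj[OF V A] by blast
  define M where "M = (norm A)\<^sup>2 + (norm Ad)\<^sup>2 + 1"
  define K where "K = id_blinfun - (1/M) *\<^sub>R (Ad o\<^sub>L A)"
  define K' where "K' = id_blinfun - (1/M) *\<^sub>R (A o\<^sub>L Ad)"
  interpret k: keyctx R A Ad K K' M
  proof
    show "von_neumann_algebra R" "A \<in> R" "Ad \<in> R" by (fact V A Ad(1))+
    show "cinner (blinfun_apply A x) y = cinner x (blinfun_apply Ad y)" for x y
      using Ad(2) unfolding is_adjoint_def by blast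
  qed (simp_all add: M_def K_def K'_def)
  show ?thesis by (rule k.key_loc[OF C])
qed

theorem proposition3p3:
  fixes R :: "('h::chilbert_space \<Rightarrow>\<^sub>L 'h) set" and A :: "'h \<Rightarrow>\<^sub>L 'h"
  assumes "von_neumann_algebra R" and "A \<in> R"
  shows "closed (left_mult_set R A) \<longleftrightarrow> wot_closed (left_mult_set R A)"
proof
  note V = assms(1) and A = assms(2)
  have bS: "bounded_op U" if "U \<in> left_mult_set R A" for U
    using that lms_sub[OF V A] vna_bounded[OF V] by blast
  show "wot_closed (left_mult_set R A) \<Longrightarrow> closed (left_mult_set R A)"
    by (rule closed_if_adh[OF bS])
  assume C: "closed (left_mult_set R A)"
  obtain F where F: "F \<in> left_mult_set R A" "\<And>z. blinfun_apply A (z - blinfun_apply F z) = 0"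
    using key[OF V A C] by blast
  obtain T0 where T0: "T0 \<in> R" "F = T0 o\<^sub>L A" using F(1) unfolding left_mult_set_def by blast
  show "wot_closed (left_mult_set R A)" unfolding wot_closed_def
  proof (intro allI impI)
    fix S assume S: "bounded_op S \<and> wot_adherent (left_mult_set R A) S"
    have "wot_adherent R S" using wot_adh_mono[OF lms_sub[OF V A]] S by blast
    then have SR: "S \<in> R" using vna_wot[OF V] S unfolding wot_closed_def by blast
    have "S = (S o\<^sub>L T0) o\<^sub>L A"
    proof (rule blinfun_eqI)
      fix z
      have "blinfun_apply S (z - blinfun_apply F z) = 0" using wot_adh_ker[OF _ F(2)] S by blast
      then have "blinfun_apply S z = blinfun_apply S (blinfun_apply F z)" by (simp add: blinfun.diff_right)
      then show "blinfun_apply S z = blinfun_apply ((S o\<^sub>L T0) o\<^sub>L A) z" by (simp add: T0(2))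
    qed
    moreover have "S o\<^sub>L T0 \<in> R" using vna_comp[OF V SR T0(1)] .
    ultimately show "S \<in> left_mult_set R A" unfolding left_mult_set_def by blast
  qed
qed

end
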